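(* Let $w$ be a capacity and $\Lambda,\Lambda_1,\Lambda_2\in\mathcal H$. Then: (i) $\Lambda\mathrm{VaR}^{w}$ and $\Lambda\mathrm{VaR}^{+,w}$ are monotone (i.e. $X\le Y$ implies $\rho(X)\le\rho(Y)$), and $\Lambda\mathrm{VaR}^{w}(X)\le \Lambda\mathrm{VaR}^{+,w}(X)$ for all $X\in\mathcal X$; (ii) if $\Lambda_1\le\Lambda_2$ pointwise, then $\Lambda_1\mathrm{VaR}^w\ge\Lambda_2\mathrm{VaR}^w$ and $\Lambda_1\mathrm{VaR}^{+,w}\ge\Lambda_2\mathrm{VaR}^{+,w}$; (iii) if $\Lambda$ is increasing, then $\Lambda\mathrm{VaR}^{w}$ and $\Lambda\mathrm{VaR}^{+,w}$ are quasi-star-shaped, i.e. $\rho(\lambda X+(1-\lambda)t)\le\max\{\rho(X),\rho(t)\}$ for all $X\in\mathcal X$, $t\in\mathbb R$, $\lambda\in[0,1]$; (iv) if $\Lambda$ is increasing, then $\Lambda\mathrm{VaR}^{w}$ and $\Lambda\mathrm{VaR}^{+,w}$ are cash-subadditive, i.e. $\rho(X+m)\le\rho(X)+m$ for all $X\in\mathcal X$, $m\ge0$; if $\Lambda$ is decreasing, they are cash-supadditive, i.e. $\rho(X+m)\ge\rho(X)+m$ for all $X\in\mathcal X$, $m\ge 0$.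
   Context: Let $(\Omega,\mathcal F)$ be a measurable space and $\mathcal X$ a set of real-valued random variables on it containing all bounded ones and closed under adding constants and affine combinations with constants. A map $w:\mathcal F\to[0,1]$ is a capacity if $w(\emptyset)=0$, $w(\Omega)=1$ and $A\subseteq B$ implies $w(A)\le w(B)$. For $\Lambda:\mathbb R\to[0,1]$ and a capacity $w$, define for $X\in\mathcal X$ $\Lambda\mathrm{VaR}^w(X)=\inf\{x\in\mathbb R: w(X>x)\le\Lambda(x)\}$ and $\Lambda\mathrm{VaR}^{+,w}(X)=\sup\{x\in\mathbb R: w(X>x)\ge\Lambda(x)\}$, with $\inf\emptyset=\infty$, $\sup\emptyset=-\infty$, where $w(X>x)=w(\{\omega:X(\omega)>x\})$. $\mathcal H$ denotes the set of all functions $\Lambda:\mathbb R\to(0,1)$. "Increasing"/"decreasing" are meant in the non-strict sense. For a constant $t$, $\rho(t)$ means $\rho$ evaluated at the constant random variable $t$. *)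

theory Defs
  imports "HOL-Analysis.Analysis"
begin

definition capacity :: "'a measure \<Rightarrow> ('a set \<Rightarrow> real) \<Rightarrow> bool" where
  "capacity M w \<longleftrightarrow>
     (\<forall>A\<in>sets M. 0 \<le> w A \<and> w A \<le> 1) \<and> w {} = 0 \<and> w (space M) = 1 \<and>
     (\<forall>A\<in>sets M. \<forall>B\<in>sets M. A \<subseteq> B \<longrightarrow> w A \<le> w B)"

definition admissible_rv_set :: "'a measure \<Rightarrow> ('a \<Rightarrow> real) set \<Rightarrow> bool" where
  "admissible_rv_set M XX \<longleftrightarrow>
     XX \<subseteq> borel_measurable M \<and>
     (\<forall>X\<in>borel_measurable M. (\<exists>B. \<forall>\<omega>\<in>space M. \<bar>X \<omega>\<bar> \<le> B) \<longrightarrow> X \<in> XX) \<and>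
     (\<forall>X\<in>XX. \<forall>c::real. (\<lambda>\<omega>. X \<omega> + c) \<in> XX) \<and>
     (\<forall>X\<in>XX. \<forall>l::real. \<forall>t::real. 0 \<le> l \<and> l \<le> 1 \<longrightarrow> (\<lambda>\<omega>. l * X \<omega> + (1 - l) * t) \<in> XX)"

definition HH :: "(real \<Rightarrow> real) set" where
  "HH = {L. \<forall>x. 0 < L x \<and> L x < 1}"

definition wgt :: "'a measure \<Rightarrow> ('a set \<Rightarrow> real) \<Rightarrow> ('a \<Rightarrow> real) \<Rightarrow> real \<Rightarrow> real" where
  "wgt M w X x = w {\<omega> \<in> space M. X \<omega> > x}"

text \<open>Lambda-VaR (lower) and Lambda-VaR^+ (upper), extended-real valued,
 with Inf {} = \<infinity> and Sup {} = -\<infinity> (as in the ereal lattice).\<close>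
definition LVaR :: "'a measure \<Rightarrow> (real \<Rightarrow> real) \<Rightarrow> ('a set \<Rightarrow> real) \<Rightarrow> ('a \<Rightarrow> real) \<Rightarrow> ereal" where
  "LVaR M L w X = Inf (ereal ` {x. wgt M w X x \<le> L x})"

definition LVaR_plus :: "'a measure \<Rightarrow> (real \<Rightarrow> real) \<Rightarrow> ('a set \<Rightarrow> real) \<Rightarrow> ('a \<Rightarrow> real) \<Rightarrow> ereal" where
  "LVaR_plus M L w X = Sup (ereal ` {x. wgt M w X x \<ge> L x})"

end

theory Submission
  imports Defs
begin

lemma ereal_le_byreal:
  fixes a b :: ereal
  assumes "\<And>x::real. a < ereal x \<Longrightarrow> b \<le> ereal x"
  shows "b \<le> a"
proof (rule ccontr)
  assume "\<not> b \<le> a"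
  then have "a < b" by simp
  then obtain z where "a < ereal z" "ereal z < b" using ereal_dense2 by blast
  with assms show False by force
qed

lemma ereal_ge_byreal:
  fixes a b :: ereal
  assumes "\<And>x::real. ereal x < a \<Longrightarrow> ereal x \<le> b"
  shows "a \<le> b"
proof (rule ccontr)
  assume "\<not> a \<le> b"
  then have "b < a" by simp
  then obtain z where "b < ereal z" "ereal z < a" using ereal_dense2 by blast
  with assms show False by force
qed

lemma level_meas:
  fixes X :: "'a \<Rightarrow> real"
  assumes "X \<in> borel_measurable M"
  shows "{\<omega> \<in> space M. X \<omega> > x} \<in> sets M"
  using assms[unfolded borel_measurable_iff_greater] by blast

lemma wgt_mono_fun:
  assumes w: "capacity M w" and X: "X \<in> borel_measurable M" and Y: "Y \<in> borel_measurable M"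
    and le: "\<forall>\<omega>\<in>space M. X \<omega> \<le> Y \<omega>"
  shows "wgt M w X x \<le> wgt M w Y x"
proof -
  have "{\<omega> \<in> space M. X \<omega> > x} \<subseteq> {\<omega> \<in> space M. Y \<omega> > x}" using le by force
  then show ?thesis using w level_meas[OF X] level_meas[OF Y] unfolding capacity_def wgt_def by blast
qed

lemma wgt_anti:
  assumes w: "capacity M w" and X: "X \<in> borel_measurable M" and "x \<le> y"
  shows "wgt M w X y \<le> wgt M w X x"
proof -
  have "{\<omega> \<in> space M. X \<omega> > y} \<subseteq> {\<omega> \<in> space M. X \<omega> > x}" using assms(3) by force
  then show ?thesis using w level_meas[OF X] level_meas[OF X] unfolding capacity_def wgt_def by blast
qed

lemma wgt_const:
  assumes w: "capacity M w"
  shows "wgt M w (\<lambda>\<omega>. t) x = (if x < t then 1 else 0)"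
  using w unfolding capacity_def wgt_def by auto

lemma wgt_shift:
  "wgt M w (\<lambda>\<omega>. X \<omega> + m) x = wgt M w X (x - m)"
  unfolding wgt_def by (rule arg_cong[where f=w]) auto

lemma LVaR_const:
  assumes w: "capacity M w" and L: "L \<in> HH"
  shows "LVaR M L w (\<lambda>\<omega>. t) = ereal t"
proof -
  have e: "{x. wgt M w (\<lambda>\<omega>. t) x \<le> L x} = {t..}"
  proof (rule set_eqI)
    fix x show "x \<in> {x. wgt M w (\<lambda>\<omega>. t) x \<le> L x} \<longleftrightarrow> x \<in> {t..}"
      using L unfolding HH_def by (auto simp: wgt_const[OF w] dest: spec[of _ x])
  qed
  have "Inf (ereal ` {t..}) = ereal t"
    by (rule antisym) (auto intro: Inf_lower Inf_greatest)
  then show ?thesis unfolding LVaR_def e .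
qed

lemma LVaR_plus_const:
  assumes w: "capacity M w" and L: "L \<in> HH"
  shows "LVaR_plus M L w (\<lambda>\<omega>. t) = ereal t"
proof -
  have e: "{x. wgt M w (\<lambda>\<omega>. t) x \<ge> L x} = {..<t}"
  proof (rule set_eqI)
    fix x show "x \<in> {x. wgt M w (\<lambda>\<omega>. t) x \<ge> L x} \<longleftrightarrow> x \<in> {..<t}"
      using L unfolding HH_def by (auto simp: wgt_const[OF w] dest: spec[of _ x])
  qed
  have "Sup (ereal ` {..<t}) = ereal t"
  proof (rule antisym)
    show "Sup (ereal ` {..<t}) \<le> ereal t" by (auto intro: Sup_least)
    show "ereal t \<le> Sup (ereal ` {..<t})"
      by (rule ereal_ge_byreal) (auto intro: Sup_upper)
  qed
  then show ?thesis unfolding LVaR_plus_def e .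
qed


lemma part_mono:
  assumes w: "capacity M w" and X: "X \<in> borel_measurable M" and Y: "Y \<in> borel_measurable M"
    and le: "\<forall>\<omega>\<in>space M. X \<omega> \<le> Y \<omega>"
  shows "LVaR M L w X \<le> LVaR M L w Y \<and> LVaR_plus M L w X \<le> LVaR_plus M L w Y"
proof
  have "{x. wgt M w Y x \<le> L x} \<subseteq> {x. wgt M w X x \<le> L x}"
    using wgt_mono_fun[OF w X Y le] by (auto intro: order_trans)
  then show "LVaR M L w X \<le> LVaR M L w Y" unfolding LVaR_def
    by (intro Inf_superset_mono image_mono)
  have "{x. wgt M w X x \<ge> L x} \<subseteq> {x. wgt M w Y x \<ge> L x}"
    using wgt_mono_fun[OF w X Y le] by (auto intro: order_trans)
  then show "LVaR_plus M L w X \<le> LVaR_plus M L w Y" unfolding LVaR_plus_def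
    by (intro Sup_subset_mono image_mono)
qed

lemma part_le_plus:
  "LVaR M L w X \<le> LVaR_plus M L w X"
proof (rule ccontr)
  assume "\<not> ?thesis"
  then have "LVaR_plus M L w X < LVaR M L w X" by simp
  then obtain z where z1: "LVaR_plus M L w X < ereal z" and z2: "ereal z < LVaR M L w X"
    using ereal_dense2 by blast
  show False
  proof (cases "wgt M w X z \<le> L z")
    case True
    then have "LVaR M L w X \<le> ereal z" unfolding LVaR_def by (auto intro: Inf_lower)
    with z2 show False by simp
  next
    case False
    then have "ereal z \<le> LVaR_plus M L w X" unfolding LVaR_plus_def by (auto intro: Sup_upper)
    with z1 show False by simp
  qed
qed

lemma part_L:
  assumes "\<forall>x. L1 x \<le> L2 x"
  shows "LVaR M L1 w X \<ge> LVaR M L2 w X \<and> LVaR_plus M L1 w X \<ge> LVaR_plus M L2 w X"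
proof
  have "{x. wgt M w X x \<le> L1 x} \<subseteq> {x. wgt M w X x \<le> L2 x}"
    using assms by (auto intro: order_trans)
  then show "LVaR M L1 w X \<ge> LVaR M L2 w X" unfolding LVaR_def
    by (intro Inf_superset_mono image_mono)
  have "{x. wgt M w X x \<ge> L2 x} \<subseteq> {x. wgt M w X x \<ge> L1 x}"
    using assms by (auto intro: order_trans)
  then show "LVaR_plus M L1 w X \<ge> LVaR_plus M L2 w X" unfolding LVaR_plus_def
    by (intro Sup_subset_mono image_mono)
qed

lemma star_subset:
  fixes l t x :: real
  assumes "0 \<le> l" "l \<le> 1" "t \<le> x"
  shows "{\<omega> \<in> space M. l * X \<omega> + (1 - l) * t > x} \<subseteq> {\<omega> \<in> space M. X \<omega> > x}"
proof
  fix \<omega> assume a: "\<omega> \<in> {\<omega> \<in> space M. l * X \<omega> + (1 - l) * t > x}"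
  show "\<omega> \<in> {\<omega> \<in> space M. X \<omega> > x}"
  proof (rule ccontr)
    assume "\<omega> \<notin> {\<omega> \<in> space M. X \<omega> > x}"
    then have "X \<omega> \<le> x" using a by auto
    then have "l * X \<omega> \<le> l * x" using assms by (simp add: mult_left_mono)
    moreover have "(1 - l) * t \<le> (1 - l) * x" using assms by (simp add: mult_left_mono)
    ultimately have "l * X \<omega> + (1 - l) * t \<le> x" by (simp add: algebra_simps)
    with a show False by auto
  qed
qed

lemma part_star:
  assumes w: "capacity M w" and L: "L \<in> HH" and X: "X \<in> borel_measurable M"
    and Z: "(\<lambda>\<omega>. l * X \<omega> + (1 - l) * t) \<in> borel_measurable M"
    and l: "0 \<le> l" "l \<le> 1"
  shows "(mono L \<longrightarrow> LVaR M L w (\<lambda>\<omega>. l * X \<omega> + (1 - l) * t)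
             \<le> max (LVaR M L w X) (LVaR M L w (\<lambda>\<omega>. t))) \<and>
         LVaR_plus M L w (\<lambda>\<omega>. l * X \<omega> + (1 - l) * t)
             \<le> max (LVaR_plus M L w X) (LVaR_plus M L w (\<lambda>\<omega>. t))"
proof
  let ?Z = "\<lambda>\<omega>. l * X \<omega> + (1 - l) * t"
  have wZ: "wgt M w ?Z x \<le> wgt M w X x" if "t \<le> x" for x
    using star_subset[OF l that, of M X] w level_meas[OF X] level_meas[OF Z]
    unfolding capacity_def wgt_def by blast
  show "mono L \<longrightarrow> LVaR M L w ?Z \<le> max (LVaR M L w X) (LVaR M L w (\<lambda>\<omega>. t))"
  proof
    assume mL: "mono L"
    show "LVaR M L w ?Z \<le> max (LVaR M L w X) (LVaR M L w (\<lambda>\<omega>. t))"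
      unfolding LVaR_const[OF w L]
    proof (rule ereal_le_byreal)
      fix x assume "max (LVaR M L w X) (ereal t) < ereal x"
      then have x1: "LVaR M L w X < ereal x" and x2: "t \<le> x" by auto
      from x1 obtain y where y: "wgt M w X y \<le> L y" "ereal y < ereal x"
        unfolding LVaR_def by (auto simp: Inf_less_iff)
      then have "y \<le> x" by simp
      have "wgt M w ?Z x \<le> wgt M w X x" using wZ[OF x2] .
      also have "\<dots> \<le> wgt M w X y" using wgt_anti[OF w X \<open>y \<le> x\<close>] .
      also have "\<dots> \<le> L y" by fact
      also have "\<dots> \<le> L x" using mL \<open>y \<le> x\<close> by (simp add: mono_def)
      finally show "LVaR M L w ?Z \<le> ereal x" unfolding LVaR_def by (auto intro: Inf_lower)
    qed
  qed
  show "LVaR_plus M L w ?Z \<le> max (LVaR_plus M L w X) (LVaR_plus M L w (\<lambda>\<omega>. t))"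
    unfolding LVaR_plus_const[OF w L] unfolding LVaR_plus_def
  proof (rule Sup_least)
    fix e assume "e \<in> ereal ` {x. L x \<le> wgt M w ?Z x}"
    then obtain x where e: "e = ereal x" and x: "L x \<le> wgt M w ?Z x" by auto
    show "e \<le> max (Sup (ereal ` {x. L x \<le> wgt M w X x})) (ereal t)"
    proof (cases "x < t")
      case True then show ?thesis using e by (simp add: le_max_iff_disj)
    next
      case False
      then have "L x \<le> wgt M w X x" using wZ[of x] x by auto
      then have "ereal x \<le> Sup (ereal ` {x. L x \<le> wgt M w X x})" by (auto intro: Sup_upper)
      then show ?thesis using e by (simp add: le_max_iff_disj)
    qed
  qed
qed

lemma part_cash_sub:
  assumes mL: "mono L" and m0: "0 \<le> m"
  shows "LVaR M L w (\<lambda>\<omega>. X \<omega> + m) \<le> LVaR M L w X + ereal m \<and>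
         LVaR_plus M L w (\<lambda>\<omega>. X \<omega> + m) \<le> LVaR_plus M L w X + ereal m"
proof
  show "LVaR M L w (\<lambda>\<omega>. X \<omega> + m) \<le> LVaR M L w X + ereal m"
  proof (rule ereal_le_byreal)
    fix x assume "LVaR M L w X + ereal m < ereal x"
    then have "LVaR M L w X < ereal (x - m)"
      by (cases "LVaR M L w X") auto
    then obtain y where y: "wgt M w X y \<le> L y" "y < x - m"
      unfolding LVaR_def by (auto simp: Inf_less_iff)
    have "L y \<le> L (y + m)" using mL m0 by (simp add: mono_def)
    then have "wgt M w (\<lambda>\<omega>. X \<omega> + m) (y + m) \<le> L (y + m)"
      using y(1) unfolding wgt_shift by simp
    then have "LVaR M L w (\<lambda>\<omega>. X \<omega> + m) \<le> ereal (y + m)"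
      unfolding LVaR_def by (auto intro: Inf_lower)
    also have "\<dots> \<le> ereal x" using y by simp
    finally show "LVaR M L w (\<lambda>\<omega>. X \<omega> + m) \<le> ereal x" .
  qed
  show "LVaR_plus M L w (\<lambda>\<omega>. X \<omega> + m) \<le> LVaR_plus M L w X + ereal m"
    unfolding LVaR_plus_def
  proof (rule Sup_least)
    fix e assume "e \<in> ereal ` {x. L x \<le> wgt M w (\<lambda>\<omega>. X \<omega> + m) x}"
    then obtain x where e: "e = ereal x" and x: "L x \<le> wgt M w X (x - m)"
      by (auto simp: wgt_shift)
    have "L (x - m) \<le> L x" using mL m0 by (simp add: mono_def)
    then have "ereal (x - m) \<le> Sup (ereal ` {x. L x \<le> wgt M w X x})"
      using x by (auto intro!: Sup_upper)
    then have "ereal (x - m) + ereal m \<le> Sup (ereal ` {x. L x \<le> wgt M w X x}) + ereal m"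
      by (rule add_right_mono)
    then show "e \<le> Sup (ereal ` {x. L x \<le> wgt M w X x}) + ereal m" using e by simp
  qed
qed

lemma part_cash_sup:
  assumes mL: "antimono L" and m0: "0 \<le> m"
  shows "LVaR M L w (\<lambda>\<omega>. X \<omega> + m) \<ge> LVaR M L w X + ereal m \<and>
         LVaR_plus M L w (\<lambda>\<omega>. X \<omega> + m) \<ge> LVaR_plus M L w X + ereal m"
proof
  show "LVaR M L w (\<lambda>\<omega>. X \<omega> + m) \<ge> LVaR M L w X + ereal m"
    unfolding LVaR_def
  proof (rule Inf_greatest)
    fix e assume "e \<in> ereal ` {x. wgt M w (\<lambda>\<omega>. X \<omega> + m) x \<le> L x}"
    then obtain x where e: "e = ereal x" and x: "wgt M w X (x - m) \<le> L x"
      by (auto simp: wgt_shift)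
    have "L x \<le> L (x - m)" using mL m0 by (simp add: antimono_def)
    then have "Inf (ereal ` {x. wgt M w X x \<le> L x}) \<le> ereal (x - m)"
      using x by (auto intro!: Inf_lower)
    then have "Inf (ereal ` {x. wgt M w X x \<le> L x}) + ereal m \<le> ereal (x - m) + ereal m"
      by (rule add_right_mono)
    then show "Inf (ereal ` {x. wgt M w X x \<le> L x}) + ereal m \<le> e" using e by simp
  qed
  show "LVaR_plus M L w (\<lambda>\<omega>. X \<omega> + m) \<ge> LVaR_plus M L w X + ereal m"
  proof (rule ereal_ge_byreal)
    fix x assume "ereal x < LVaR_plus M L w X + ereal m"
    then have "ereal (x - m) < LVaR_plus M L w X"
      by (cases "LVaR_plus M L w X") auto
    then obtain y where y: "L y \<le> wgt M w X y" "x - m < y"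
      unfolding LVaR_plus_def by (auto simp: less_Sup_iff)
    have "L (y + m) \<le> L y" using mL m0 by (simp add: antimono_def)
    then have "L (y + m) \<le> wgt M w (\<lambda>\<omega>. X \<omega> + m) (y + m)"
      using y(1) unfolding wgt_shift by simp
    then have "ereal (y + m) \<le> LVaR_plus M L w (\<lambda>\<omega>. X \<omega> + m)"
      unfolding LVaR_plus_def by (auto intro: Sup_upper)
    moreover have "ereal x \<le> ereal (y + m)" using y by simp
    ultimately show "ereal x \<le> LVaR_plus M L w (\<lambda>\<omega>. X \<omega> + m)" using order_trans by blast
  qed
qed

theorem mainTheorem1:
  fixes M :: "'a measure" and w :: "'a set \<Rightarrow> real" and XX :: "('a \<Rightarrow> real) set"
    and L L1 L2 :: "real \<Rightarrow> real"
  assumes XX: "admissible_rv_set M XX"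
    and w: "capacity M w"
    and L: "L \<in> HH" and L1: "L1 \<in> HH" and L2: "L2 \<in> HH"
  shows
    \<comment> \<open>(i)\<close>
    "(\<forall>X\<in>XX. \<forall>Y\<in>XX. (\<forall>\<omega>\<in>space M. X \<omega> \<le> Y \<omega>) \<longrightarrow>
        LVaR M L w X \<le> LVaR M L w Y \<and> LVaR_plus M L w X \<le> LVaR_plus M L w Y)
     \<and> (\<forall>X\<in>XX. LVaR M L w X \<le> LVaR_plus M L w X)
     \<comment> \<open>(ii)\<close>
     \<and> ((\<forall>x. L1 x \<le> L2 x) \<longrightarrow>
        (\<forall>X\<in>XX. LVaR M L1 w X \<ge> LVaR M L2 w X \<and> LVaR_plus M L1 w X \<ge> LVaR_plus M L2 w X))
     \<comment> \<open>(iii)\<close>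
     \<and> (mono L \<longrightarrow>
        (\<forall>X\<in>XX. \<forall>t::real. \<forall>l::real. 0 \<le> l \<and> l \<le> 1 \<longrightarrow>
           LVaR M L w (\<lambda>\<omega>. l * X \<omega> + (1 - l) * t)
             \<le> max (LVaR M L w X) (LVaR M L w (\<lambda>\<omega>. t)) \<and>
           LVaR_plus M L w (\<lambda>\<omega>. l * X \<omega> + (1 - l) * t)
             \<le> max (LVaR_plus M L w X) (LVaR_plus M L w (\<lambda>\<omega>. t))))
     \<comment> \<open>(iv)\<close>
     \<and> (mono L \<longrightarrow>
        (\<forall>X\<in>XX. \<forall>m::real. 0 \<le> m \<longrightarrow>
           LVaR M L w (\<lambda>\<omega>. X \<omega> + m) \<le> LVaR M L w X + ereal m \<and>
           LVaR_plus M L w (\<lambda>\<omega>. X \<omega> + m) \<le> LVaR_plus M L w X + ereal m))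
     \<and> (antimono L \<longrightarrow>
        (\<forall>X\<in>XX. \<forall>m::real. 0 \<le> m \<longrightarrow>
           LVaR M L w (\<lambda>\<omega>. X \<omega> + m) \<ge> LVaR M L w X + ereal m \<and>
           LVaR_plus M L w (\<lambda>\<omega>. X \<omega> + m) \<ge> LVaR_plus M L w X + ereal m))"
proof -
  have meas: "X \<in> borel_measurable M" if "X \<in> XX" for X
    using XX that unfolding admissible_rv_set_def by blast
  have aff: "(\<lambda>\<omega>. l * X \<omega> + (1 - l) * t) \<in> XX" if "X \<in> XX" "0 \<le> l" "l \<le> 1" for X l t
    using XX that unfolding admissible_rv_set_def by blast
  note facts = part_mono[OF w meas meas] part_le_plus part_L part_cash_sub part_cash_sup
      part_star[OF w L meas meas[OF aff]]
  show ?thesis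
    apply (intro conjI ballI allI impI)
    apply (use facts in blast)+
    subgoal for X t l using part_star[OF w L meas[of X] meas[OF aff[of X l t]]] by auto
    subgoal for X t l using part_star[OF w L meas[of X] meas[OF aff[of X l t]]] by auto
    subgoal for X m using part_cash_sub[of L m M w X] by auto
    subgoal for X m using part_cash_sub[of L m M w X] by auto
    subgoal for X m using part_cash_sup[of L m M w X] by auto
    subgoal for X m using part_cash_sup[of L m M w X] by auto
    done
qed

end
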